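(* Let $\mathcal{U}$ be an update family on $\mathbb{Z}$ for which $-1$ is a stable direction (i.e. no $X\in\mathcal{U}$ satisfies $X\subset\{1,2,3,\dots\}$). Then for every $n\in\mathbb{N}$, every $\Lambda\subset\mathbb{Z}$ with $\{-r(2^n-1),\dots,rn2^{n-1}\}\subset\Lambda$, and every $\eta\in V(n,\Lambda)$, one has $\eta_0=1$.
   Context: An update family is a set $\mathcal{U}$ of finitely many finite nonempty subsets of $\mathbb{Z}\setminus\{0\}$, and $r=\max\{|x-y| : x,y\in X\cup\{0\}, X\in\mathcal{U}\}$. For $\Lambda\subset\mathbb{Z}$, configurations are elements of $\{0,1\}^\Lambda$; $1_\Lambda$ is the all-ones configuration; $\eta^s$ is $\eta$ with the state at $s$ flipped. A move from $\eta$ to $\eta'$ is legal if $\eta'=\eta$, or $\eta'=\eta^s$ for some $s\in\Lambda$ and some $X\in\mathcal{U}$ has all sites of $s+X$ in state $0$ in the configuration equal to $\eta$ on $\Lambda$ and $0$ outside $\Lambda$. A legal path is a finite sequence $(\eta^j)_{0\le j\le m}$, $m\ge1$, with all consecutive moves legal; it is $n$-legal if every $\eta^j$ has at most $n$ zeroes in $\Lambda$. $V(n,\Lambda)$ is the set of configurations reachable from $1_\Lambda$ by an $n$-legal path. *)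

theory Defs
  imports Main
begin

definition update_family :: "int set set \<Rightarrow> bool" where
  "update_family U \<longleftrightarrow> finite U \<and> (\<forall>X\<in>U. finite X \<and> X \<noteq> {} \<and> 0 \<notin> X)"

definition range_of :: "int set set \<Rightarrow> int" where
  "range_of U = Max {\<bar>x - y\<bar> | x y X. X \<in> U \<and> x \<in> insert 0 X \<and> y \<in> insert 0 X}"

(* Configurations in {0,1}^Lambda, represented as functions int => nat,
   with values in {0,1} on Lambda and the (irrelevant) canonical value 1 outside Lambda. *)
definition config :: "int set \<Rightarrow> (int \<Rightarrow> nat) set" where
  "config \<Lambda> = {\<eta>. (\<forall>x\<in>\<Lambda>. \<eta> x \<in> {0, 1}) \<and> (\<forall>x. x \<notin> \<Lambda> \<longrightarrow> \<eta> x = 1)}"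

definition ones :: "int \<Rightarrow> nat" where
  "ones = (\<lambda>x. 1)"

definition flip :: "(int \<Rightarrow> nat) \<Rightarrow> int \<Rightarrow> (int \<Rightarrow> nat)" where
  "flip \<eta> s = \<eta>(s := 1 - \<eta> s)"

definition ext0 :: "int set \<Rightarrow> (int \<Rightarrow> nat) \<Rightarrow> (int \<Rightarrow> nat)" where
  "ext0 \<Lambda> \<eta> = (\<lambda>x. if x \<in> \<Lambda> then \<eta> x else 0)"

definition legal_move :: "int set set \<Rightarrow> int set \<Rightarrow> (int \<Rightarrow> nat) \<Rightarrow> (int \<Rightarrow> nat) \<Rightarrow> bool" where
  "legal_move U \<Lambda> \<eta> \<eta>' \<longleftrightarrow>
     \<eta>' = \<eta> \<or>
     (\<exists>s\<in>\<Lambda>. \<eta>' = flip \<eta> s \<and> (\<exists>X\<in>U. \<forall>x\<in>X. ext0 \<Lambda> \<eta> (s + x) = 0))"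

definition at_most_zeroes :: "nat \<Rightarrow> int set \<Rightarrow> (int \<Rightarrow> nat) \<Rightarrow> bool" where
  "at_most_zeroes n \<Lambda> \<eta> \<longleftrightarrow> finite {x\<in>\<Lambda>. \<eta> x = 0} \<and> card {x\<in>\<Lambda>. \<eta> x = 0} \<le> n"

(* legal path (eta^0, ..., eta^m), m >= 1, given as a list of length m+1 *)
definition legal_path :: "int set set \<Rightarrow> int set \<Rightarrow> (int \<Rightarrow> nat) list \<Rightarrow> bool" where
  "legal_path U \<Lambda> p \<longleftrightarrow> length p \<ge> 2 \<and> set p \<subseteq> config \<Lambda> \<and>
     (\<forall>j. j + 1 < length p \<longrightarrow> legal_move U \<Lambda> (p ! j) (p ! (j + 1)))"

definition n_legal_path :: "nat \<Rightarrow> int set set \<Rightarrow> int set \<Rightarrow> (int \<Rightarrow> nat) list \<Rightarrow> bool" where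
  "n_legal_path n U \<Lambda> p \<longleftrightarrow> legal_path U \<Lambda> p \<and> (\<forall>\<eta>\<in>set p. at_most_zeroes n \<Lambda> \<eta>)"

definition V :: "int set set \<Rightarrow> nat \<Rightarrow> int set \<Rightarrow> (int \<Rightarrow> nat) set" where
  "V U n \<Lambda> = {\<eta>. \<exists>p. n_legal_path n U \<Lambda> p \<and> hd p = ones \<and> last p = \<eta>}"

definition minus_one_stable :: "int set set \<Rightarrow> bool" where
  "minus_one_stable U \<longleftrightarrow> (\<forall>X\<in>U. \<not> X \<subseteq> {1..})"

end

theory Submission
  imports Defs
begin

definition DD :: "int \<Rightarrow> nat \<Rightarrow> int" where
  "DD r k = r * (2 ^ k - 1)"

lemma DD_0[simp]: "DD r 0 = 0" by (simp add: DD_def)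

lemma DD_Suc: "DD r (Suc k) = 2 * DD r k + r"
  by (simp add: DD_def algebra_simps)

lemma DD_nonneg: "r \<ge> 0 \<Longrightarrow> DD r k \<ge> 0"
  unfolding DD_def by (simp add: one_le_power)

lemma G:
  fixes h :: "nat \<Rightarrow> int \<Rightarrow> bool" and r :: int
  assumes r: "r \<ge> 0"
  shows "(\<forall>i<N. \<forall>s. h i s \<noteq> h (Suc i) s \<longrightarrow> (\<exists>y. s - r \<le> y \<and> y < s \<and> h i y \<and> h (Suc i) y)) \<Longrightarrow>
     (\<forall>i\<le>N. card {x. b < x \<and> x \<le> e \<and> h i x} \<le> k) \<Longrightarrow>
     (\<forall>x. b < x \<and> x \<le> e \<longrightarrow> \<not> h 0 x) \<Longrightarrow>
     i \<le> N \<Longrightarrow> b + DD r k < x \<Longrightarrow> x \<le> e \<Longrightarrow> \<not> h i x"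
proof (induction k arbitrary: b e N h i x)
  case 0
  have fin: "finite {x. b < x \<and> x \<le> e \<and> h i x}"
    by (rule finite_subset[of _ "{b<..e}"]) auto
  have "{x. b < x \<and> x \<le> e \<and> h i x} = {}"
    using 0(2,4) fin by auto
  then show ?case using 0 by auto
next
  case (Suc k)
  note IH = Suc.IH
  note P = Suc.prems
  show ?case
  proof
    assume hix: "h i x"
    define b' where "b' = b + DD r k + r"
    have bb': "b \<le> b'" using DD_nonneg[OF r, of k] r by (simp add: b'_def)
    have "\<exists>t\<le>N. \<not> card {z. b' < z \<and> z \<le> e \<and> h t z} \<le> k"
    proof (rule ccontr)
      assume "\<not> ?thesis"
      then have c: "\<forall>t\<le>N. card {z. b' < z \<and> z \<le> e \<and> h t z} \<le> k" by auto
      have init': "\<forall>z. b' < z \<and> z \<le> e \<longrightarrow> \<not> h 0 z" using P(3) bb' by auto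
      have "b' + DD r k < x" using P(5) by (simp add: DD_Suc b'_def)
      then have "\<not> h i x" using IH[OF P(1) c init' P(4)] P(6) by blast
      with hix show False by simp
    qed
    then obtain t where tN: "t \<le> N" and big: "\<not> card {z. b' < z \<and> z \<le> e \<and> h t z} \<le> k" by blast
    define S' where "S' = {z. b' < z \<and> z \<le> e \<and> h t z}"
    define S where "S = {z. b < z \<and> z \<le> e \<and> h t z}"
    have finS: "finite S" unfolding S_def by (rule finite_subset[of _ "{b<..e}"]) auto
    have sub: "S' \<subseteq> S" using bb' unfolding S_def S'_def by auto
    have cS: "card S \<le> Suc k" using P(2) tN unfolding S_def by blast
    have "card S' \<ge> Suc k" using big unfolding S'_def by simp
    then have "card S' = card S" using card_mono[OF finS sub] cS by simp
    then have SS: "S' = S" using card_subset_eq[OF finS sub] by simp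
    have finS': "finite S'" using finS SS by simp
    have neS': "S' \<noteq> {}" using big unfolding S'_def by (metis card.empty zero_le)
    define a where "a = Min S'"
    have aS': "a \<in> S'" using Min_in[OF finS' neS'] a_def by simp
    then have hta: "h t a" and ab': "b' < a" and ae: "a \<le> e" unfolding S'_def by auto
    have left: "\<forall>z. b < z \<and> z < a \<longrightarrow> \<not> h t z"
    proof (intro allI impI)
      fix z assume z: "b < z \<and> z < a"
      show "\<not> h t z"
      proof
        assume "h t z"
        then have "z \<in> S" using z ae unfolding S_def by auto
        then have "z \<in> S'" using SS by simp
        then have "a \<le> z" using Min_le[OF finS'] a_def by simp
        with z show False by simp
      qed
    qed
    define h' where "h' j = h (t - j)" for j
    have step': "\<forall>i<j. \<forall>s. h' i s \<noteq> h' (Suc i) s \<longrightarrow> (\<exists>y. s - r \<le> y \<and> y < s \<and> h' i y \<and> h' (Suc i) y)"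
      if "j \<le> t" for j
    proof (intro allI impI)
      fix i s assume ij: "i < j" and d: "h' i s \<noteq> h' (Suc i) s"
      define m where "m = t - Suc i"
      have mN: "m < N" using ij that tN unfolding m_def by simp
      have e1: "h' i = h (Suc m)" using ij that unfolding m_def h'_def by (simp add: Suc_diff_Suc)
      have e2: "h' (Suc i) = h m" unfolding m_def h'_def by simp
      have "h m s \<noteq> h (Suc m) s" using d e1 e2 by simp
      then obtain y where "s - r \<le> y \<and> y < s \<and> h m y \<and> h (Suc m) y"
        using P(1) mN by blast
      then show "\<exists>y. s - r \<le> y \<and> y < s \<and> h' i y \<and> h' (Suc i) y" using e1 e2 by auto
    qed
    have main: "j \<le> t \<longrightarrow> (\<forall>i'\<le>j. h' i' a)" for j
    proof (induction j)
      case 0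
      then show ?case using hta by (simp add: h'_def)
    next
      case (Suc j)
      show ?case
      proof
        assume jt: "Suc j \<le> t"
        then have prev: "\<forall>i'\<le>j. h' i' a" using Suc.IH by simp
        have "h' (Suc j) a"
        proof (rule ccontr)
          assume nh: "\<not> h' (Suc j) a"
          have "h' j a \<noteq> h' (Suc j) a" using prev nh by simp
          then obtain y where y: "a - r \<le> y" "y < a" "h' j y" "h' (Suc j) y"
            using step'[OF jt] by blast
          have st: "\<forall>i<j. \<forall>s. h' i s \<noteq> h' (Suc i) s \<longrightarrow> (\<exists>y. s - r \<le> y \<and> y < s \<and> h' i y \<and> h' (Suc i) y)"
            using step' jt by simp
          have cnt: "\<forall>i'\<le>j. card {z. b < z \<and> z \<le> a - 1 \<and> h' i' z} \<le> k"
          proof (intro allI impI)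
            fix i' assume i'j: "i' \<le> j"
            define A where "A = {z. b < z \<and> z \<le> a - 1 \<and> h' i' z}"
            define B where "B = {z. b < z \<and> z \<le> e \<and> h (t - i') z}"
            have finB: "finite B" unfolding B_def by (rule finite_subset[of _ "{b<..e}"]) auto
            have "insert a A \<subseteq> B" using prev i'j bb' ab' ae unfolding A_def B_def h'_def by auto
            then have "card (insert a A) \<le> card B" using card_mono[OF finB] by blast
            moreover have "t - i' \<le> N" using tN by simp
            then have "card B \<le> Suc k" using P(2) unfolding B_def by blast
            moreover have "finite A" using finite_subset[OF _ finB] \<open>insert a A \<subseteq> B\<close> by blast
            moreover have "a \<notin> A" unfolding A_def by simp
            ultimately have "card A \<le> k" using card_insert_disjoint by fastforce
            then show "card {z. b < z \<and> z \<le> a - 1 \<and> h' i' z} \<le> k" unfolding A_def by simp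
          qed
          have ini: "\<forall>z. b < z \<and> z \<le> a - 1 \<longrightarrow> \<not> h' 0 z" using left unfolding h'_def by simp
          have "b + DD r k < y" using y(1) ab' unfolding b'_def by simp
          then have "\<not> h' j y" using IH[OF st cnt ini _ _ ] y(2) by simp
          with y(3) show False by simp
        qed
        then show "\<forall>i'\<le>Suc j. h' i' a" using prev le_Suc_eq by auto
      qed
    qed
    have "h' t a" using main[of t] by simp
    then have "h 0 a" by (simp add: h'_def)
    moreover have "b < a" using bb' ab' by simp
    ultimately show False using P(3) ae by blast
  qed
qed


lemma range_bound:
  assumes uf: "update_family U" and XU: "X \<in> U" and xX: "x \<in> X"
  shows "\<bar>x\<bar> \<le> range_of U"
proof -
  define T where "T = {\<bar>x - y\<bar> | x y X. X \<in> U \<and> x \<in> insert 0 X \<and> y \<in> insert 0 X}"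
  have "T \<subseteq> (\<lambda>(x,y). \<bar>x - y\<bar>) ` (\<Union>X\<in>U. insert 0 X \<times> insert 0 X)"
    unfolding T_def by fastforce
  moreover have "finite (\<Union>X\<in>U. insert 0 X \<times> insert 0 X)"
    using uf unfolding update_family_def by auto
  ultimately have fin: "finite T" using finite_subset by blast
  have "\<bar>x - 0\<bar> \<in> T" unfolding T_def using XU xX by blast
  then have "\<bar>x - 0\<bar> \<le> Max T" using Max_ge[OF fin] by blast
  then show ?thesis unfolding range_of_def T_def by simp
qed

lemma range_nonneg:
  assumes uf: "update_family U" and ne: "U \<noteq> {}"
  shows "range_of U \<ge> 0"
proof -
  define T where "T = {\<bar>x - y\<bar> | x y X. X \<in> U \<and> x \<in> insert 0 X \<and> y \<in> insert 0 X}"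
  have "T \<subseteq> (\<lambda>(x,y). \<bar>x - y\<bar>) ` (\<Union>X\<in>U. insert 0 X \<times> insert 0 X)"
    unfolding T_def by fastforce
  moreover have "finite (\<Union>X\<in>U. insert 0 X \<times> insert 0 X)"
    using uf unfolding update_family_def by auto
  ultimately have fin: "finite T" using finite_subset by blast
  obtain X where "X \<in> U" using ne by blast
  then have "\<bar>0 - 0\<bar> \<in> T" unfolding T_def by blast
  then have "\<bar>0 - 0\<bar> \<le> Max T" using Max_ge[OF fin] by blast
  then show ?thesis unfolding range_of_def T_def by simp
qed

lemma move_step:
  assumes uf: "update_family U" and st: "minus_one_stable U"
    and mv: "legal_move U \<Lambda> \<eta> \<eta>'"
  shows "\<forall>s. (ext0 \<Lambda> \<eta> s = 0) \<noteq> (ext0 \<Lambda> \<eta>' s = 0) \<longrightarrow>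
     (\<exists>y. s - (if U = {} then 0 else range_of U) \<le> y \<and> y < s \<and> ext0 \<Lambda> \<eta> y = 0 \<and> ext0 \<Lambda> \<eta>' y = 0)"
proof (cases "\<eta>' = \<eta>")
  case True
  then show ?thesis by simp
next
  case False
  then obtain s0 X where s0: "s0 \<in> \<Lambda>" "\<eta>' = flip \<eta> s0" and XU: "X \<in> U"
    and Xz: "\<forall>x\<in>X. ext0 \<Lambda> \<eta> (s0 + x) = 0"
    using mv unfolding legal_move_def by blast
  have same: "ext0 \<Lambda> \<eta>' z = ext0 \<Lambda> \<eta> z" if "z \<noteq> s0" for z
    using that s0(2) unfolding ext0_def flip_def by simp
  obtain x where xX: "x \<in> X" and x1: "\<not> x \<ge> 1"
    using st XU unfolding minus_one_stable_def by auto
  have "x \<noteq> 0" using uf XU xX unfolding update_family_def by auto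
  with x1 have xneg: "x < 0" by simp
  have xb: "\<bar>x\<bar> \<le> range_of U" using range_bound[OF uf XU xX] .
  have ne: "U \<noteq> {}" using XU by auto
  show ?thesis
  proof (intro allI impI)
    fix s assume d: "(ext0 \<Lambda> \<eta> s = 0) \<noteq> (ext0 \<Lambda> \<eta>' s = 0)"
    then have "s = s0" using same by metis
    have y1: "ext0 \<Lambda> \<eta> (s0 + x) = 0" using Xz xX by blast
    moreover have "ext0 \<Lambda> \<eta>' (s0 + x) = 0" using same[of "s0 + x"] y1 xneg by simp
    ultimately show "\<exists>y. s - (if U = {} then 0 else range_of U) \<le> y \<and> y < s \<and> ext0 \<Lambda> \<eta> y = 0 \<and> ext0 \<Lambda> \<eta>' y = 0"
      using \<open>s = s0\<close> xneg xb ne by (intro exI[of _ "s0 + x"]) auto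
  qed
qed

theorem mainTheorem4:
  fixes U :: "int set set" and n :: nat and \<Lambda> :: "int set" and \<eta> :: "int \<Rightarrow> nat"
  assumes "update_family U"
    and "minus_one_stable U"
    and "{- range_of U * (2 ^ n - 1) .. range_of U * int n * 2 ^ (n - 1)} \<subseteq> \<Lambda>"
    and "\<eta> \<in> V U n \<Lambda>"
  shows "\<eta> 0 = 1"
proof -
  obtain p where np: "n_legal_path n U \<Lambda> p" and hd: "hd p = ones" and lst: "last p = \<eta>"
    using assms(4) unfolding V_def by blast
  have lp: "legal_path U \<Lambda> p" and az: "\<forall>\<eta>\<in>set p. at_most_zeroes n \<Lambda> \<eta>"
    using np unfolding n_legal_path_def by auto
  have len: "length p \<ge> 2" and cfg: "set p \<subseteq> config \<Lambda>"
    and mvs: "\<forall>j. j + 1 < length p \<longrightarrow> legal_move U \<Lambda> (p ! j) (p ! (j + 1))"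
    using lp unfolding legal_path_def by auto
  have pne: "p \<noteq> []" using len by auto
  have etacfg: "\<eta> \<in> config \<Lambda>" using cfg lst pne last_in_set by blast
  show ?thesis
  proof (cases "0 \<in> \<Lambda>")
    case False
    then show ?thesis using etacfg unfolding config_def by auto
  next
    case True
    define r where "r = (if U = {} then 0 else range_of U)"
    have r0: "r \<ge> 0" using range_nonneg[OF assms(1)] unfolding r_def by auto
    define N where "N = length p - 1"
    define h where "h i x = (ext0 \<Lambda> (p ! i) x = 0)" for i x
    define b :: int where "b = - r * (2 ^ n - 1) - 1"
    have win: "z \<in> \<Lambda>" if "b < z" "z \<le> 0" for z
    proof (cases "U = {}")
      case True
      then have "z = 0" using that unfolding b_def r_def by simp
      then show ?thesis using \<open>0 \<in> \<Lambda>\<close> by simp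
    next
      case False
      then have rr: "r = range_of U" unfolding r_def by simp
      have "0 \<le> range_of U * int n * 2 ^ (n - 1)" using r0 rr by simp
      then have "z \<in> {- range_of U * (2 ^ n - 1) .. range_of U * int n * 2 ^ (n - 1)}"
        using that rr unfolding b_def by auto
      then show ?thesis using assms(3) by blast
    qed
    have step: "\<forall>i<N. \<forall>s. h i s \<noteq> h (Suc i) s \<longrightarrow> (\<exists>y. s - r \<le> y \<and> y < s \<and> h i y \<and> h (Suc i) y)"
    proof (intro allI impI)
      fix i s assume iN: "i < N" and d: "h i s \<noteq> h (Suc i) s"
      have "legal_move U \<Lambda> (p ! i) (p ! (i + 1))" using mvs iN unfolding N_def by simp
      from move_step[OF assms(1,2) this] d
      show "\<exists>y. s - r \<le> y \<and> y < s \<and> h i y \<and> h (Suc i) y" unfolding h_def r_def by simp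
    qed
    have cnt: "\<forall>i\<le>N. card {x. b < x \<and> x \<le> 0 \<and> h i x} \<le> n"
    proof (intro allI impI)
      fix i assume iN: "i \<le> N"
      then have "p ! i \<in> set p" using len unfolding N_def by simp
      then have "at_most_zeroes n \<Lambda> (p ! i)" using az by blast
      then have f: "finite {x\<in>\<Lambda>. (p ! i) x = 0}" and c: "card {x\<in>\<Lambda>. (p ! i) x = 0} \<le> n"
        unfolding at_most_zeroes_def by auto
      have "{x. b < x \<and> x \<le> 0 \<and> h i x} \<subseteq> {x\<in>\<Lambda>. (p ! i) x = 0}"
        using win unfolding h_def ext0_def by auto
      then show "card {x. b < x \<and> x \<le> 0 \<and> h i x} \<le> n" using card_mono[OF f] c by (meson order_trans)
    qed
    have p0: "p ! 0 = ones" using hd pne by (simp add: hd_conv_nth)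
    have ini: "\<forall>x. b < x \<and> x \<le> 0 \<longrightarrow> \<not> h 0 x"
      unfolding h_def p0 ext0_def ones_def using win by simp
    have bD: "b + DD r n < 0" unfolding b_def DD_def by simp
    have "\<not> h N 0" using G[OF r0 step cnt ini _ bD] by simp
    moreover have "p ! N = \<eta>" using lst pne unfolding N_def by (simp add: last_conv_nth)
    ultimately have "\<eta> 0 \<noteq> 0" using True unfolding h_def ext0_def by simp
    then show ?thesis using etacfg True unfolding config_def by auto
  qed
qed

end
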